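(* In the model described in the context, if $(\tilde y_0^+,\tilde y_0^-)=(0,1)$ (deterministically), then $$\Pr(W_2)-\Pr(W_1) = \tfrac12 G\Big(1 - a^{m-1}\big(1-\rho' + m\rho' + \rho'\tfrac{1-q'}{q'}\big)\Big),$$ and this quantity is positive for all sufficiently large $m$.
   Context: Model. Fix an integer $m\ge 2$, and reals $1>\rho>q>0$, $0\le\nu<\tfrac12$. A sample consists of ground-truth labels $y_0,y_1,\dots,y_m\in\{0,1\}$ and noisy labels $\tilde y_0,\dots,\tilde y_m\in\{0,1\}$. Given $y_0$, the labels $y_1,\dots,y_m$ are conditionally independent with $\Pr(y_i=1\mid y_0=1)=\rho$ and $\Pr(y_i=1\mid y_0=0)=q$ for $i\in\{1,\dots,m\}$. For $i\in\{1,\dots,m\}$, $\tilde y_i = 1-y_i$ with probability $\nu$ and $\tilde y_i=y_i$ otherwise, the flips being independent of each other and of everything else. A positive sample has $y_0=1$ and a negative sample has $y_0=0$; we draw one positive sample (superscript $+$) and one negative sample (superscript $-$) independently. The pair $(\tilde y_0^+,\tilde y_0^-)\in\{0,1\}^2$ has an arbitrary distribution, independent of all $y_i^\pm,\tilde y_i^\pm$ with $i\ge1$. Fix $\delta>0$. For each sample set $\bar s_{0,i} := \max(\tilde y_0,\tilde y_i)+\delta\min(\tilde y_0,\tilde y_i)$ for $i=1,\dots,m$, and let $\bar r_1\ge \bar r_2$ be the largest and second largest elements of $\{\bar s_{0,1},\dots,\bar s_{0,m}\}$ (as a multiset). Notation: $\rho' := (1-\nu)\rho+\nu(1-\rho)$,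 $q':=(1-\nu)q+\nu(1-q)$, $a:=1-\rho'$, $\gamma := \frac{1-q'}{1-\rho'}$, $A := m(1-a)a^{m-1}$, $G := m(1-\gamma a)(\gamma a)^{m-1}$. For $k\in\{1,2\}$, $\Pr(W_k) := \Pr(\bar r_k^+>\bar r_k^-) + \tfrac12\Pr(\bar r_k^+=\bar r_k^-)$. *)

theory Defs
  imports "HOL-Probability.Probability"
begin

text \<open>One coordinate i >= 1 of a sample:
  ground truth y_i ~ Bernoulli(p) (p = rho for a positive sample, p = q for a negative one),
  flip indicator ~ Bernoulli(nu), independent; the result is the pair (y_i, noisy y_i).\<close>
definition label_pmf :: "real \<Rightarrow> real \<Rightarrow> (nat \<times> nat) pmf" where
  "label_pmf p \<nu> = do {
     y \<leftarrow> bernoulli_pmf p;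
     f \<leftarrow> bernoulli_pmf \<nu>;
     return_pmf (of_bool y, if f then 1 - of_bool y else of_bool y) }"

definition labels_pmf :: "nat \<Rightarrow> real \<Rightarrow> real \<Rightarrow> (nat \<times> nat) list pmf" where
  "labels_pmf m p \<nu> = replicate_pmf m (label_pmf p \<nu>)"

definition sbar :: "real \<Rightarrow> nat \<Rightarrow> nat \<Rightarrow> real" where
  "sbar \<delta> t0 ti = real (max t0 ti) + \<delta> * real (min t0 ti)"

definition kth_largest :: "nat \<Rightarrow> real list \<Rightarrow> real" where
  "kth_largest k xs = rev (sort xs) ! (k - 1)"

text \<open>r_k for one sample: t0 = noisy y_0, ls = [(y_i, noisy y_i) | i = 1..m].\<close>
definition rbar :: "real \<Rightarrow> nat \<Rightarrow> nat \<Rightarrow> (nat \<times> nat) list \<Rightarrow> real" where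
  "rbar \<delta> k t0 ls = kth_largest k (map (\<lambda>l. sbar \<delta> t0 (snd l)) ls)"

text \<open>Joint distribution of (r_k^+, r_k^-): D is the distribution of (noisy y_0^+, noisy y_0^-),
  independent of the positive sample (y_0 = 1, rate rho) and negative sample (y_0 = 0, rate q).\<close>
definition rpair_pmf :: "(nat \<times> nat) pmf \<Rightarrow> nat \<Rightarrow> real \<Rightarrow> real \<Rightarrow> real \<Rightarrow> real \<Rightarrow> nat
    \<Rightarrow> (real \<times> real) pmf" where
  "rpair_pmf D m \<rho> q \<nu> \<delta> k = do {
     t \<leftarrow> D;
     lp \<leftarrow> labels_pmf m \<rho> \<nu>;
     ln \<leftarrow> labels_pmf m q \<nu>;
     return_pmf (rbar \<delta> k (fst t) lp, rbar \<delta> k (snd t) ln) }"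

definition PrW :: "(nat \<times> nat) pmf \<Rightarrow> nat \<Rightarrow> real \<Rightarrow> real \<Rightarrow> real \<Rightarrow> real \<Rightarrow> nat \<Rightarrow> real" where
  "PrW D m \<rho> q \<nu> \<delta> k =
     measure_pmf.prob (rpair_pmf D m \<rho> q \<nu> \<delta> k) {x. fst x > snd x}
     + 1/2 * measure_pmf.prob (rpair_pmf D m \<rho> q \<nu> \<delta> k) {x. fst x = snd x}"

definition noisy_rate :: "real \<Rightarrow> real \<Rightarrow> real" where
  "noisy_rate \<nu> p = (1 - \<nu>) * p + \<nu> * (1 - p)"

definition G_val :: "nat \<Rightarrow> real \<Rightarrow> real \<Rightarrow> real \<Rightarrow> real" where
  "G_val m \<rho> q \<nu> =
     (let a = 1 - noisy_rate \<nu> \<rho>; \<gamma> = (1 - noisy_rate \<nu> q) / (1 - noisy_rate \<nu> \<rho>)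
      in real m * (1 - \<gamma> * a) * (\<gamma> * a) ^ (m - 1))"

end

theory Submission
  imports Defs
begin

lemma sort_two:
  fixes u v :: real
  assumes "set xs \<subseteq> {u,v}" "u < v"
  shows "sort xs = replicate (length (filter (\<lambda>x. x = u) xs)) u @ replicate (length (filter (\<lambda>x. x = v) xs)) v"
proof (rule properties_for_sort)
  show "mset (replicate (length (filter (\<lambda>x. x = u) xs)) u @ replicate (length (filter (\<lambda>x. x = v) xs)) v) = mset xs"
    using assms by (induction xs) (auto simp: add_mset_commute)
  show "sorted (replicate (length (filter (\<lambda>x. x = u) xs)) u @ replicate (length (filter (\<lambda>x. x = v) xs)) v)"
    using assms(2) by (auto simp: sorted_append)
qed

lemma kth_two:
  fixes u v :: real
  assumes "set xs \<subseteq> {u,v}" "u < v" "1 \<le> k" "k \<le> length xs"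
  shows "kth_largest k xs = (if length (filter (\<lambda>x. x = v) xs) \<ge> k then v else u)"
proof -
  have len: "length (filter (\<lambda>x. x = u) xs) + length (filter (\<lambda>x. x = v) xs) = length xs"
    using assms(1,2) by (induction xs) auto
  show ?thesis
    unfolding kth_largest_def sort_two[OF assms(1,2)] using assms(3,4) len
    by (auto simp: nth_append)
qed

lemma map_replicate_pmf: "map_pmf (map g) (replicate_pmf n P) = replicate_pmf n (map_pmf g P)"
proof (induction n)
  case (Suc n)
  show ?case
    apply (simp only: replicate_pmf.simps Suc.IH[symmetric])
    by (simp add: map_pmf_def bind_assoc_pmf bind_return_pmf)
qed simp

lemma label_bern:
  assumes "0 \<le> p" "p \<le> 1" "0 \<le> \<nu>" "\<nu> \<le> 1"
  shows "map_pmf (\<lambda>l. snd l = 1) (label_pmf p \<nu>) = bernoulli_pmf (noisy_rate \<nu> p)"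
proof (rule pmf_eqI)
  fix b :: bool
  have nr: "0 \<le> noisy_rate \<nu> p" "noisy_rate \<nu> p \<le> 1"
    using assms unfolding noisy_rate_def by (auto intro!: add_nonneg_nonneg mult_nonneg_nonneg)
      (smt (verit) mult_left_le mult_nonneg_nonneg)
  show "pmf (map_pmf (\<lambda>l. snd l = 1) (label_pmf p \<nu>)) b = pmf (bernoulli_pmf (noisy_rate \<nu> p)) b"
    unfolding label_pmf_def map_bind_pmf map_return_pmf
    using assms nr by (cases b) (auto simp: pmf_bind noisy_rate_def algebra_simps)
qed

lemma label_set: "l \<in> set_pmf (label_pmf p \<nu>) \<Longrightarrow> snd l \<in> {0,1}"
  unfolding label_pmf_def by (auto simp: of_bool_def split: if_splits)

definition cnt :: "(nat \<times> nat) list \<Rightarrow> nat" where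
  "cnt ls = length (filter (\<lambda>l. snd l = 1) ls)"

lemma cnt_binomial:
  assumes "0 \<le> p" "p \<le> 1" "0 \<le> \<nu>" "\<nu> \<le> 1"
  shows "map_pmf cnt (labels_pmf m p \<nu>) = binomial_pmf m (noisy_rate \<nu> p)"
proof -
  have nr: "noisy_rate \<nu> p \<in> {0..1}"
    using assms unfolding noisy_rate_def by (auto intro!: add_nonneg_nonneg mult_nonneg_nonneg)
      (smt (verit) mult_left_le mult_nonneg_nonneg)
  have "cnt = (length \<circ> filter id) \<circ> map (\<lambda>l. snd l = 1)"
    by (auto simp: cnt_def filter_map comp_def fun_eq_iff)
  then show ?thesis
    unfolding binomial_pmf_altdef[OF nr] labels_pmf_def label_bern[OF assms, symmetric]
    by (simp add: map_replicate_pmf[symmetric] pmf.map_comp)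
qed

lemma rbar_vals:
  assumes "\<forall>l\<in>set ls. snd l \<in> {0,1}" "1 \<le> k" "k \<le> length ls" "\<delta> > 0"
  shows "rbar \<delta> k 0 ls = (if k \<le> cnt ls then 1 else 0)"
    and "rbar \<delta> k 1 ls = (if k \<le> cnt ls then 1 + \<delta> else 1)"
proof -
  have c0: "length (filter (\<lambda>x. x = 1) (map (\<lambda>l. sbar \<delta> 0 (snd l)) ls)) = cnt ls"
    unfolding cnt_def filter_map length_map
    by (rule arg_cong[where f=length], rule filter_cong) (auto simp: sbar_def)
  have s0: "set (map (\<lambda>l. sbar \<delta> 0 (snd l)) ls) \<subseteq> {0,1}"
    using assms(1) by (auto simp: sbar_def)
  show "rbar \<delta> k 0 ls = (if k \<le> cnt ls then 1 else 0)"
    unfolding rbar_def using kth_two[OF s0 _ assms(2)] assms(3) c0 by simp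
  have c1: "length (filter (\<lambda>x. x = 1 + \<delta>) (map (\<lambda>l. sbar \<delta> 1 (snd l)) ls)) = cnt ls"
    unfolding cnt_def filter_map length_map
    by (rule arg_cong[where f=length], rule filter_cong) (use assms(1,4) in \<open>auto simp: sbar_def\<close>)
  have s1: "set (map (\<lambda>l. sbar \<delta> 1 (snd l)) ls) \<subseteq> {1,1+\<delta>}"
    using assms(1) by (auto simp: sbar_def)
  show "rbar \<delta> k 1 ls = (if k \<le> cnt ls then 1 + \<delta> else 1)"
    unfolding rbar_def using kth_two[OF s1 _ assms(2)] assms(3,4) c1 by simp
qed

lemma labels_set: "ls \<in> set_pmf (labels_pmf m p \<nu>) \<Longrightarrow> length ls = m \<and> (\<forall>l\<in>set ls. snd l \<in> {0,1})"
  unfolding labels_pmf_def set_replicate_pmf using label_set by (fastforce simp: in_lists_conv_set)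

lemma rpair_eq:
  assumes "0 \<le> \<rho>" "\<rho> \<le> 1" "0 \<le> q" "q \<le> 1" "0 \<le> \<nu>" "\<nu> \<le> 1" "\<delta> > 0" "1 \<le> k" "k \<le> m"
  shows "rpair_pmf (return_pmf (0,1)) m \<rho> q \<nu> \<delta> k =
    map_pmf (\<lambda>(a,b). (if k \<le> a then 1 else 0, if k \<le> b then 1 + \<delta> else 1))
      (pair_pmf (binomial_pmf m (noisy_rate \<nu> \<rho>)) (binomial_pmf m (noisy_rate \<nu> q)))"
proof -
  have "rpair_pmf (return_pmf (0,1)) m \<rho> q \<nu> \<delta> k =
     map_pmf (\<lambda>(lp,ln). (rbar \<delta> k 0 lp, rbar \<delta> k 1 ln)) (pair_pmf (labels_pmf m \<rho> \<nu>) (labels_pmf m q \<nu>))"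
    unfolding rpair_pmf_def pair_pmf_def map_pmf_def
    by (simp add: bind_return_pmf bind_assoc_pmf)
  also have "\<dots> = map_pmf ((\<lambda>(a,b). (if k \<le> a then 1 else 0, if k \<le> b then 1 + \<delta> else 1)) \<circ> (\<lambda>(lp,ln). (cnt lp, cnt ln)))
       (pair_pmf (labels_pmf m \<rho> \<nu>) (labels_pmf m q \<nu>))"
    by (rule map_pmf_cong) (use assms labels_set rbar_vals in auto)
  also have "\<dots> = map_pmf (\<lambda>(a,b). (if k \<le> a then 1 else 0, if k \<le> b then 1 + \<delta> else 1))
      (pair_pmf (map_pmf cnt (labels_pmf m \<rho> \<nu>)) (map_pmf cnt (labels_pmf m q \<nu>)))"
    by (simp add: pmf.map_comp[symmetric] map_pair[symmetric])
  finally show ?thesis using cnt_binomial assms by simp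
qed

lemma PrW_eq:
  assumes "0 \<le> \<rho>" "\<rho> \<le> 1" "0 \<le> q" "q \<le> 1" "0 \<le> \<nu>" "\<nu> \<le> 1" "\<delta> > 0" "1 \<le> k" "k \<le> m"
  shows "PrW (return_pmf (0,1)) m \<rho> q \<nu> \<delta> k =
    1/2 * (1 - (\<Sum>i<k. pmf (binomial_pmf m (noisy_rate \<nu> \<rho>)) i)) * (\<Sum>i<k. pmf (binomial_pmf m (noisy_rate \<nu> q)) i)"
proof -
  define B1 where "B1 = binomial_pmf m (noisy_rate \<nu> \<rho>)"
  define B2 where "B2 = binomial_pmf m (noisy_rate \<nu> q)"
  define h :: "nat \<times> nat \<Rightarrow> real \<times> real" where "h = (\<lambda>(a,b). (if k \<le> a then 1 else 0, if k \<le> b then 1 + \<delta> else 1))"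
  have e1: "h -` {x. fst x > snd x} = {}"
    using assms(7) by (auto simp: h_def split: if_splits)
  have e2: "h -` {x. fst x = snd x} = (UNIV - {..<k}) \<times> {..<k}"
    using assms(7) by (auto simp: h_def split: if_splits)
  have p1: "measure_pmf.prob B1 (UNIV - {..<k}) = 1 - (\<Sum>i<k. pmf B1 i)"
    using measure_pmf.prob_compl[of "{..<k}" B1] by (simp add: measure_measure_pmf_finite)
  have "PrW (return_pmf (0,1)) m \<rho> q \<nu> \<delta> k = 1/2 * measure_pmf.prob (pair_pmf B1 B2) ((UNIV - {..<k}) \<times> {..<k})"
    unfolding PrW_def rpair_eq[OF assms] B1_def[symmetric] B2_def[symmetric] h_def[symmetric] measure_map_pmf e1 e2
    by simp
  also have "\<dots> = 1/2 * (1 - (\<Sum>i<k. pmf B1 i)) * (\<Sum>i<k. pmf B2 i)"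
    by (simp add: measure_pmf_prob_product p1 measure_measure_pmf_finite)
  finally show ?thesis unfolding B1_def B2_def .
qed

theorem lemma5:
  fixes \<rho> q \<nu> \<delta> :: real and D :: "(nat \<times> nat) pmf"
  assumes "0 < q" and "q < \<rho>" and "\<rho> < 1" and "0 \<le> \<nu>" and "\<nu> < 1/2" and "\<delta> > 0"
    and "D = return_pmf (0, 1)"
  shows "(\<forall>m::nat. m \<ge> 2 \<longrightarrow>
            PrW D m \<rho> q \<nu> \<delta> 2 - PrW D m \<rho> q \<nu> \<delta> 1
            = 1/2 * G_val m \<rho> q \<nu> *
              (1 - (1 - noisy_rate \<nu> \<rho>) ^ (m - 1) *
                   (1 - noisy_rate \<nu> \<rho> + real m * noisy_rate \<nu> \<rho>
                    + noisy_rate \<nu> \<rho> * (1 - noisy_rate \<nu> q) / noisy_rate \<nu> q)))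
       \<and> (\<exists>M. \<forall>m\<ge>M. PrW D m \<rho> q \<nu> \<delta> 2 - PrW D m \<rho> q \<nu> \<delta> 1 > 0)"
proof -
  define r where "r = noisy_rate \<nu> \<rho>"
  define s where "s = noisy_rate \<nu> q"
  have nrb: "0 < noisy_rate \<nu> p \<and> noisy_rate \<nu> p < 1" if "0 < p" "p < 1" for p
  proof -
    have a1: "(1 - \<nu>) * p > 0" using that assms by simp
    have a2: "\<nu> * (1 - p) \<ge> 0" using that assms by simp
    have a3: "(1 - \<nu>) * p < 1 - \<nu>" using that assms by simp
    have a4: "\<nu> * (1 - p) \<le> \<nu>" using that assms by (simp add: mult_left_le)
    show ?thesis unfolding noisy_rate_def using a1 a2 a3 a4 by linarith
  qed
  have r01: "0 < r" "r < 1" unfolding r_def using nrb[of \<rho>] assms by auto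
  have s01: "0 < s" "s < 1" unfolding s_def using nrb[of q] assms by auto
  have G: "G_val m \<rho> q \<nu> = real m * s * (1 - s) ^ (m - 1)" for m
    unfolding G_val_def Let_def r_def[symmetric] s_def[symmetric] using r01 by simp
  have eq: "PrW D m \<rho> q \<nu> \<delta> 2 - PrW D m \<rho> q \<nu> \<delta> 1
            = 1/2 * G_val m \<rho> q \<nu> *
              (1 - (1 - r) ^ (m - 1) * (1 - r + real m * r + r * (1 - s) / s))" if m2: "m \<ge> 2" for m
  proof -
    obtain n where n: "m = Suc n" "n \<ge> 1" using m2 by (cases m) auto
    have P2: "PrW D m \<rho> q \<nu> \<delta> 2 = 1/2 * (1 - ((1-r)^m + real m * r * (1-r)^n)) * ((1-s)^m + real m * s * (1-s)^n)"
      unfolding assms(7) using assms m2 r01 s01 n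
      by (subst PrW_eq) (simp_all add: numeral_2_eq_2 r_def[symmetric] s_def[symmetric])
    have P1: "PrW D m \<rho> q \<nu> \<delta> 1 = 1/2 * (1 - (1-r)^m) * (1-s)^m"
      unfolding assms(7) using assms m2 r01 s01 n
      by (subst PrW_eq) (simp_all add: r_def[symmetric] s_def[symmetric])
    show ?thesis unfolding P1 P2 G unfolding n(1) using s01
      by (simp add: field_simps)
  qed
  have part1: "\<forall>m::nat. m \<ge> 2 \<longrightarrow>
            PrW D m \<rho> q \<nu> \<delta> 2 - PrW D m \<rho> q \<nu> \<delta> 1
            = 1/2 * G_val m \<rho> q \<nu> *
              (1 - (1 - noisy_rate \<nu> \<rho>) ^ (m - 1) *
                   (1 - noisy_rate \<nu> \<rho> + real m * noisy_rate \<nu> \<rho>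
                    + noisy_rate \<nu> \<rho> * (1 - noisy_rate \<nu> q) / noisy_rate \<nu> q))"
    using eq unfolding r_def s_def by auto
  define K where "K = 1 + r * (1 - s) / s"
  have l1: "(\<lambda>n. (1-r)^n) \<longlonglongrightarrow> 0" by (rule LIMSEQ_power_zero) (use r01 in simp)
  have l2: "(\<lambda>n. real n * (1-r)^n) \<longlonglongrightarrow> 0"
    using powser_times_n_limit_0[of "1-r"] r01 by simp
  have lim: "(\<lambda>n. (1-r)^n * K + r * (real n * (1-r)^n)) \<longlonglongrightarrow> 0"
    using tendsto_add[OF tendsto_mult[OF l1 tendsto_const[of K]] tendsto_mult[OF tendsto_const[of r] l2]] by simp
  from order_tendstoD(2)[OF lim, of 1] obtain N where
    N: "\<And>n. n \<ge> N \<Longrightarrow> (1-r)^n * K + r * (real n * (1-r)^n) < 1"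
    by (auto simp: eventually_sequentially)
  have "\<forall>m\<ge>N+2. PrW D m \<rho> q \<nu> \<delta> 2 - PrW D m \<rho> q \<nu> \<delta> 1 > 0"
  proof (intro allI impI)
    fix m assume m: "m \<ge> N + 2"
    then obtain n where n: "m = Suc n" "n \<ge> N" by (cases m) auto
    have Gp: "G_val m \<rho> q \<nu> > 0" unfolding G using s01 n by simp
    have "(1 - r) ^ (m - 1) * (1 - r + real m * r + r * (1 - s) / s) = (1-r)^n * K + r * (real n * (1-r)^n)"
      unfolding K_def n(1) by (simp add: algebra_simps)
    then have pos: "1 - (1 - r) ^ (m - 1) * (1 - r + real m * r + r * (1 - s) / s) > 0"
      using N[OF n(2)] by simp
    show "PrW D m \<rho> q \<nu> \<delta> 2 - PrW D m \<rho> q \<nu> \<delta> 1 > 0"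
    proof -
      have "m \<ge> 2" using m by simp
      note e = eq[OF this]
      show ?thesis unfolding e using Gp pos by simp
    qed
  qed
  then show ?thesis using part1 by blast
qed

end
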